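(* Let $\mathcal{H}$ and $\mathcal{H}'$ be finite-dimensional Hilbert spaces, and let $\Phi:\mathcal{B}(\mathcal{H})\to\mathcal{B}(\mathcal{H}')$ be a quantum channel (a completely positive trace-preserving map). Let $\rho_{\text{in}}=\sum_{i=1}^{r}p_i|p_i\rangle\langle p_i|$ be a density matrix on $\mathcal{H}$ of rank $r$, where $\{|p_i\rangle\}_{i=1}^r$ are orthonormal, $0<p_i\leq 1$ and $\sum_{i=1}^r p_i=1$, and let $\rho_{\text{out}}=\Phi(\rho_{\text{in}})$. Define the information production $\Delta S\equiv S(\rho_{\text{out}})-S(\rho_{\text{in}})$ and the distribution $$\widetilde{P}(\sigma)\equiv\sum_{i=1}^{r}p_i\,\delta\big(\sigma-C(\Phi(|p_i\rangle\langle p_i|),\rho_{\text{out}})-\ln p_i\big),$$ i.e. $\sigma$ takes the value $\sigma_i=C(\Phi(|p_i\rangle\langle p_i|),\rho_{\text{out}})+\ln p_i$ with probability $p_i$, and write $\langle f(\sigma)\rangle_{\widetilde{P}}=\int d\sigma\,\widetilde{P}(\sigma)f(\sigma)=\sum_{i=1}^r p_i f(\sigma_i)$. Then $$\langle e^{-\sigma}\rangle_{\widetilde{P}}=\sum_{i=1}^{r}e^{-C(\Phi(|p_i\rangle\langle p_i|),\rho_{\text{out}})},$$ and consequently $\Delta S\geq L_{\text{otm}}$, where $$L_{\text{otm}}\equiv-\ln\Big(\sum_{i=1}^{r}e^{-C(\Phi(|p_i\rangle\langle p_i|),\rho_{\text{out}})}\Big).$$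
   Context: $\mathcal{B}(\mathcal{H})$ denotes the set of density matrices on $\mathcal{H}$. $S(\rho)\equiv-\mathrm{Tr}[\rho\ln\rho]$ is the von Neumann entropy. $C(\rho_1,\rho_2)\equiv-\mathrm{Tr}[\rho_1\ln\rho_2]$ is the quantum cross entropy of $\rho_1$ with respect to $\rho_2$; it is finite when $\mathrm{supp}(\rho_1)\subseteq\mathrm{supp}(\rho_2)$ (with $\ln\rho_2$ taken on the support of $\rho_2$) and equals $+\infty$ otherwise. Since $\rho_{\text{out}}=\sum_i p_i\Phi(|p_i\rangle\langle p_i|)$, each $C(\Phi(|p_i\rangle\langle p_i|),\rho_{\text{out}})$ is finite. *)

theory Defs
  imports Complex_Main "Jordan_Normal_Form.Matrix"
begin

text \<open>Finite-dimensional Hilbert spaces are modelled as C^n; operators on them as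
  n x n complex matrices (type complex mat with carrier_mat n n).\<close>

definition mtrace :: "complex mat \<Rightarrow> complex" where
  "mtrace A = (\<Sum>i<dim_row A. A $$ (i,i))"

definition adj :: "complex mat \<Rightarrow> complex mat" where
  "adj A = mat (dim_col A) (dim_row A) (\<lambda>(i,j). cnj (A $$ (j,i)))"

definition cinner :: "complex vec \<Rightarrow> complex vec \<Rightarrow> complex" where
  "cinner u w = (\<Sum>k<dim_vec u. cnj (u $ k) * w $ k)"

definition hermitian :: "nat \<Rightarrow> complex mat \<Rightarrow> bool" where
  "hermitian n A \<longleftrightarrow> A \<in> carrier_mat n n \<and> adj A = A"

definition psd :: "nat \<Rightarrow> complex mat \<Rightarrow> bool" where
  "psd n A \<longleftrightarrow> hermitian n A \<and>
     (\<forall>x \<in> carrier_vec n. Im (cinner x (A *\<^sub>v x)) = 0 \<and> Re (cinner x (A *\<^sub>v x)) \<ge> 0)"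

definition density :: "nat \<Rightarrow> complex mat \<Rightarrow> bool" where
  "density n \<rho> \<longleftrightarrow> psd n \<rho> \<and> mtrace \<rho> = 1"

definition unitary :: "nat \<Rightarrow> complex mat \<Rightarrow> bool" where
  "unitary n U \<longleftrightarrow> U \<in> carrier_mat n n \<and> U * adj U = 1\<^sub>m n \<and> adj U * U = 1\<^sub>m n"

definition diag_of :: "nat \<Rightarrow> (nat \<Rightarrow> real) \<Rightarrow> complex mat" where
  "diag_of n d = mat n n (\<lambda>(i,j). if i = j then complex_of_real (d i) else 0)"

definition spectral_decomp :: "nat \<Rightarrow> complex mat \<Rightarrow> complex mat \<Rightarrow> (nat \<Rightarrow> real) \<Rightarrow> bool" where
  "spectral_decomp n A U d \<longleftrightarrow> unitary n U \<and> A = U * diag_of n d * adj U"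

definition mat_fun :: "(real \<Rightarrow> real) \<Rightarrow> complex mat \<Rightarrow> complex mat" where
  "mat_fun f A = (SOME M. \<exists>U d. spectral_decomp (dim_row A) A U d \<and>
                              M = U * diag_of (dim_row A) (\<lambda>i. f (d i)) * adj U)"

text \<open>Logarithm taken on the support (eigenvalue 0 is mapped to 0).\<close>
definition ln_supp :: "real \<Rightarrow> real" where
  "ln_supp x = (if x > 0 then ln x else 0)"

definition mat_ln :: "complex mat \<Rightarrow> complex mat" where
  "mat_ln A = mat_fun ln_supp A"

definition vn_entropy :: "complex mat \<Rightarrow> real" where
  "vn_entropy \<rho> = - Re (mtrace (\<rho> * mat_ln \<rho>))"

text \<open>Quantum cross entropy C(rho1, rho2) = - Tr[rho1 ln rho2], ln taken on the support
  of rho2 (this is the finite value; used only where supp rho1 is contained in supp rho2).\<close>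
definition cross_entropy :: "complex mat \<Rightarrow> complex mat \<Rightarrow> real" where
  "cross_entropy \<rho>1 \<rho>2 = - Re (mtrace (\<rho>1 * mat_ln \<rho>2))"

definition ketbra :: "complex vec \<Rightarrow> complex mat" where
  "ketbra v = mat (dim_vec v) (dim_vec v) (\<lambda>(i,j). v $ i * cnj (v $ j))"

definition linear_map :: "nat \<Rightarrow> nat \<Rightarrow> (complex mat \<Rightarrow> complex mat) \<Rightarrow> bool" where
  "linear_map n m \<Phi> \<longleftrightarrow>
     (\<forall>A \<in> carrier_mat n n. \<Phi> A \<in> carrier_mat m m) \<and>
     (\<forall>A \<in> carrier_mat n n. \<forall>B \<in> carrier_mat n n. \<Phi> (A + B) = \<Phi> A + \<Phi> B) \<and>
     (\<forall>c. \<forall>A \<in> carrier_mat n n. \<Phi> (c \<cdot>\<^sub>m A) = c \<cdot>\<^sub>m \<Phi> A)"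

definition trace_preserving :: "nat \<Rightarrow> (complex mat \<Rightarrow> complex mat) \<Rightarrow> bool" where
  "trace_preserving n \<Phi> \<longleftrightarrow> (\<forall>A \<in> carrier_mat n n. mtrace (\<Phi> A) = mtrace A)"

text \<open>(a,b)-th n x n block of a (k n) x (k n) matrix, i.e. an operator on C^k (x) C^n.\<close>
definition block :: "nat \<Rightarrow> complex mat \<Rightarrow> nat \<Rightarrow> nat \<Rightarrow> complex mat" where
  "block n X a b = mat n n (\<lambda>(i,j). X $$ (a * n + i, b * n + j))"

text \<open>id_k (x) Phi applied to X, acting blockwise.\<close>
definition ampliate :: "nat \<Rightarrow> nat \<Rightarrow> nat \<Rightarrow> (complex mat \<Rightarrow> complex mat) \<Rightarrow> complex mat \<Rightarrow> complex mat" where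
  "ampliate k n m \<Phi> X = mat (k * m) (k * m)
     (\<lambda>(i,j). \<Phi> (block n X (i div m) (j div m)) $$ (i mod m, j mod m))"

definition completely_positive :: "nat \<Rightarrow> nat \<Rightarrow> (complex mat \<Rightarrow> complex mat) \<Rightarrow> bool" where
  "completely_positive n m \<Phi> \<longleftrightarrow>
     (\<forall>k. \<forall>X. psd (k * n) X \<longrightarrow> psd (k * m) (ampliate k n m \<Phi> X))"

definition quantum_channel :: "nat \<Rightarrow> nat \<Rightarrow> (complex mat \<Rightarrow> complex mat) \<Rightarrow> bool" where
  "quantum_channel n m \<Phi> \<longleftrightarrow>
     linear_map n m \<Phi> \<and> trace_preserving n \<Phi> \<and> completely_positive n m \<Phi>"

end

theory Submission
  imports Defs "Jordan_Normal_Form.Schur_Decomposition"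
begin

lemma mult_entry:
  assumes "A \<in> carrier_mat a b" "B \<in> carrier_mat b c" "i < a" "j < c"
  shows "(A * B) $$ (i,j) = (\<Sum>k<b. A $$ (i,k) * B $$ (k,j))"
  using assms by (auto simp: scalar_prod_def atLeast0LessThan intro!: sum.cong)

lemma adj_carrier[simp]: "A \<in> carrier_mat a b \<Longrightarrow> adj A \<in> carrier_mat b a"
  by (auto simp: adj_def)

lemma adj_dims[simp]: "dim_row (adj A) = dim_col A" "dim_col (adj A) = dim_row A"
  by (auto simp: adj_def)

lemma adj_index[simp]: "i < dim_col A \<Longrightarrow> j < dim_row A \<Longrightarrow> adj A $$ (i,j) = cnj (A $$ (j,i))"
  by (auto simp: adj_def)

lemma adj_adj[simp]: "adj (adj A) = A"
  by (rule eq_matI) auto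

lemma adj_mult:
  assumes "A \<in> carrier_mat a b" "B \<in> carrier_mat b c"
  shows "adj (A * B) = adj B * adj A"
proof (rule eq_matI)
  fix i j assume ij: "i < dim_row (adj B * adj A)" "j < dim_col (adj B * adj A)"
  then have i: "i < c" and j: "j < a" using assms by auto
  have "adj (A * B) $$ (i,j) = cnj ((A*B) $$ (j,i))" using assms i j by simp
  also have "\<dots> = (\<Sum>k<b. cnj (A $$ (j,k)) * cnj (B $$ (k,i)))"
    using mult_entry[OF assms j i] by simp
  also have "\<dots> = (adj B * adj A) $$ (i,j)"
    by (subst mult_entry[of _ c b _ a]) (use assms i j in \<open>auto intro!: sum.cong\<close>)
  finally show "adj (A * B) $$ (i, j) = (adj B * adj A) $$ (i, j)" .
qed (use assms in auto)

lemma adj_one[simp]: "adj (1\<^sub>m n) = 1\<^sub>m n"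
  by (rule eq_matI) auto

lemma cnj_mult_self: "cnj z * z = complex_of_real ((cmod z)^2)"
  by (simp add: complex_eq_iff cmod_power2) (simp add: power2_eq_square)

lemma cinner_self: "cinner w w = complex_of_real (\<Sum>k<dim_vec w. (cmod (w $ k))^2)"
  unfolding cinner_def of_real_sum of_real_power by (intro sum.cong refl) (simp add: cnj_mult_self)

lemma diag_entry:
  assumes "U \<in> carrier_mat N N" "i < N" "j < N"
  shows "(U * diag_of N d * adj U) $$ (i,j) = (\<Sum>k<N. U $$ (i,k) * complex_of_real (d k) * cnj (U $$ (j,k)))"
proof -
  have D: "diag_of N d \<in> carrier_mat N N" by (simp add: diag_of_def)
  have "(U * diag_of N d * adj U) $$ (i,j) = (\<Sum>k<N. (U * diag_of N d) $$ (i,k) * adj U $$ (k,j))"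
    by (rule mult_entry[of _ N N]) (use assms D in auto)
  also have "\<dots> = (\<Sum>k<N. U $$ (i,k) * complex_of_real (d k) * cnj (U $$ (j,k)))"
  proof (rule sum.cong[OF refl])
    fix k assume k: "k \<in> {..<N}"
    have "(U * diag_of N d) $$ (i,k) = (\<Sum>l<N. U $$ (i,l) * diag_of N d $$ (l,k))"
      by (rule mult_entry) (use assms D k in auto)
    also have "\<dots> = (\<Sum>l<N. if l = k then U $$ (i,k) * complex_of_real (d k) else 0)"
      by (rule sum.cong) (use k assms in \<open>auto simp: diag_of_def\<close>)
    also have "\<dots> = U $$ (i,k) * complex_of_real (d k)" using k by simp
    finally show "(U * diag_of N d) $$ (i,k) * adj U $$ (k,j) = U $$ (i,k) * complex_of_real (d k) * cnj (U $$ (j,k))"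
      using assms k by simp
  qed
  finally show ?thesis .
qed

lemma adjmult_entry:
  assumes "X \<in> carrier_mat N a" "Y \<in> carrier_mat N b" "i < a" "j < b"
  shows "(adj X * Y) $$ (i,j) = (\<Sum>k<N. cnj (X $$ (k,i)) * Y $$ (k,j))"
  by (subst mult_entry[of _ a N _ b]) (use assms in auto)

lemma eigen_exists:
  fixes A :: "complex mat"
  assumes A: "A \<in> carrier_mat (Suc n) (Suc n)"
  shows "\<exists>e. eigenvalue A e"
proof -
  obtain as where cp: "char_poly A = (\<Prod>a\<leftarrow>as. [:- a, 1:])" and len: "length as = Suc n"
    using char_poly_factorized[OF A] by blast
  then obtain e rest where as: "as = e # rest" by (cases as) auto
  have "poly (char_poly A) e = 0" unfolding cp as by simp
  then show ?thesis using eigenvalue_root_char_poly[OF A] by blast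
qed

lemma orthonormal_basis:
  fixes v :: "complex vec"
  assumes v: "v \<in> carrier_vec N" and v0: "v \<noteq> 0\<^sub>v N"
  shows "\<exists>W. W \<in> carrier_mat N N \<and> adj W * W = 1\<^sub>m N \<and> W * adj W = 1\<^sub>m N \<and>
     (\<exists>c. \<forall>i<N. W $$ (i,0) = c * v $ i)"
proof -
  interpret cof_vec_space N "TYPE(complex)" .
  define b where "b = basis_completion v"
  define ws where "ws = gram_schmidt N b"
  from basis_completion[OF v v0, folded b_def]
  have dist_b: "distinct b" and indep: "\<not> lin_dep (set b)" and b: "set b \<subseteq> carrier_vec N"
    and len_b: "length b = N" by auto
  from gram_schmidt_result[OF b dist_b indep ws_def]
  have ws: "set ws \<subseteq> carrier_vec N" "corthogonal ws" "length ws = N" by (auto simp: len_b)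
  obtain vs where bv: "b = v # vs" unfolding b_def basis_completion_def Let_def by auto
  have hdws: "hd ws = v" unfolding ws_def bv using v by simp
  have Npos: "0 < N" using len_b bv by auto
  have ws0: "ws ! 0 = v" using hdws ws(3) Npos by (cases ws) auto
  have wsc: "\<And>j. j < N \<Longrightarrow> ws ! j \<in> carrier_vec N" using ws by auto
  define s where "s j = (\<Sum>k<N. (cmod (ws ! j $ k))^2)" for j
  have ci: "cinner (ws!j) (ws!i) = (ws!i \<bullet>c ws!j)" if "i<N" "j<N" for i j
    using wsc[OF that(1)] wsc[OF that(2)]
    by (auto simp: cinner_def scalar_prod_def atLeast0LessThan mult.commute intro!: sum.cong)
  have cs: "cinner (ws!j) (ws!j) = complex_of_real (s j)" if "j < N" for j
    using cinner_self[of "ws!j"] wsc[OF that] by (simp add: s_def)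
  have spos: "s j > 0" if "j < N" for j
  proof -
    have "ws!j \<bullet>c ws!j \<noteq> 0" using corthogonalD[OF ws(2)] ws(3) that by auto
    then have "s j \<noteq> 0" using ci[OF that that] cs[OF that] by auto
    moreover have "s j \<ge> 0" unfolding s_def by (intro sum_nonneg) auto
    ultimately show ?thesis by auto
  qed
  have orth: "cinner (ws!i) (ws!j) = (if i = j then complex_of_real (s j) else 0)" if "i<N" "j<N" for i j
    using cs ci[OF that(2,1)] corthogonalD[OF ws(2)] ws(3) that by auto
  define W where "W = mat N N (\<lambda>(i,j). ws!j $ i / complex_of_real (sqrt (s j)))"
  have W: "W \<in> carrier_mat N N" by (simp add: W_def)
  have WW: "adj W * W = 1\<^sub>m N"
  proof (rule eq_matI)
    fix i j assume "i < dim_row (1\<^sub>m N)" "j < dim_col (1\<^sub>m N)"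
    then have i: "i < N" and j: "j < N" by auto
    have "(adj W * W) $$ (i,j) = (\<Sum>k<N. cnj (W $$ (k,i)) * W $$ (k,j))"
      by (rule adjmult_entry[OF W W i j])
    also have "\<dots> = (\<Sum>k<N. cnj (ws!i $ k) * ws!j $ k) / (complex_of_real (sqrt (s i)) * complex_of_real (sqrt (s j)))"
      unfolding sum_divide_distrib by (rule sum.cong) (use i j in \<open>auto simp: W_def\<close>)
    also have "(\<Sum>k<N. cnj (ws!i $ k) * ws!j $ k) = cinner (ws!i) (ws!j)"
      using wsc[OF i] by (simp add: cinner_def)
    also have "cinner (ws!i) (ws!j) / (complex_of_real (sqrt (s i)) * complex_of_real (sqrt (s j))) = 1\<^sub>m N $$ (i,j)"
    proof (cases "i = j")
      case True
      have "sqrt (s j) * sqrt (s j) = s j" using spos[OF j] by simp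
      then have "complex_of_real (sqrt (s j)) * complex_of_real (sqrt (s j)) = complex_of_real (s j)"
        by (metis of_real_mult)
      then show ?thesis using True orth[OF i j] spos[OF j] i by simp
    next
      case False then show ?thesis using orth[OF i j] i j by simp
    qed
    finally show "(adj W * W) $$ (i,j) = 1\<^sub>m N $$ (i,j)" .
  qed (use W in auto)
  have WW': "W * adj W = 1\<^sub>m N"
    by (rule mat_mult_left_right_inverse[OF adj_carrier[OF W] W WW])
  have "\<forall>i<N. W $$ (i,0) = complex_of_real (1 / sqrt (s 0)) * v $ i"
    using Npos ws0 by (auto simp: W_def divide_inverse mult.commute)
  then show ?thesis using W WW WW' by blast
qed

lemma spectral:
  "hermitian n A \<Longrightarrow> \<exists>U d. unitary n U \<and> A = U * diag_of n d * adj U"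
proof (induction n arbitrary: A)
  case 0
  have A: "A \<in> carrier_mat 0 0" using 0 by (simp add: hermitian_def)
  show ?case
    by (rule exI[of _ "1\<^sub>m 0"], rule exI[of _ "\<lambda>_. 0"])
       (use A in \<open>auto simp: unitary_def diag_of_def intro!: eq_matI\<close>)
next
  case (Suc n)
  define N where "N = Suc n"
  have A: "A \<in> carrier_mat N N" and hA: "adj A = A" using Suc.prems by (auto simp: hermitian_def N_def)
  obtain e where "eigenvalue A e" using eigen_exists A N_def by blast
  then obtain v where "eigenvector A v e" unfolding eigenvalue_def by blast
  then have v: "v \<in> carrier_vec N" and v0: "v \<noteq> 0\<^sub>v N" and Av: "A *\<^sub>v v = e \<cdot>\<^sub>v v"
    using A unfolding eigenvector_def by auto
  obtain W c where W: "W \<in> carrier_mat N N" and WW: "adj W * W = 1\<^sub>m N" and WW': "W * adj W = 1\<^sub>m N"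
    and W0: "\<forall>i<N. W $$ (i,0) = c * v $ i"
    using orthonormal_basis[OF v v0] by blast
  have AW0: "(A * W) $$ (k,0) = e * W $$ (k,0)" if k: "k < N" for k
  proof -
    have "(A * W) $$ (k,0) = (\<Sum>l<N. A $$ (k,l) * W $$ (l,0))"
      by (rule mult_entry[OF A W k]) (simp add: N_def)
    also have "\<dots> = c * (\<Sum>l<N. A $$ (k,l) * v $ l)"
      unfolding sum_distrib_left by (rule sum.cong) (use W0 in auto)
    also have "(\<Sum>l<N. A $$ (k,l) * v $ l) = (A *\<^sub>v v) $ k"
      using A v k by (auto simp: scalar_prod_def atLeast0LessThan intro!: sum.cong)
    also have "\<dots> = e * v $ k" using Av v k by simp
    finally show ?thesis using W0 k by simp
  qed
  define A' where "A' = adj W * (A * W)"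
  have A': "A' \<in> carrier_mat N N" unfolding A'_def using mult_carrier_mat[OF adj_carrier[OF W] mult_carrier_mat[OF A W]] .
  have hA': "adj A' = A'"
  proof -
    have "adj A' = adj (A * W) * adj (adj W)"
      unfolding A'_def by (rule adj_mult) (use A W in auto)
    also have "\<dots> = adj W * A * W" using adj_mult[OF A W] hA by simp
    also have "\<dots> = A'" unfolding A'_def using A W by (simp add: assoc_mult_mat[of _ N N _ N _ N])
    finally show ?thesis .
  qed
  have A'0: "A' $$ (i,0) = (if i = 0 then e else 0)" if i: "i < N" for i
  proof -
    have "A' $$ (i,0) = (\<Sum>k<N. cnj (W $$ (k,i)) * (A * W) $$ (k,0))"
      unfolding A'_def by (rule adjmult_entry[of _ N N _ N]) (use A W i in \<open>auto simp: N_def\<close>)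
    also have "\<dots> = e * (\<Sum>k<N. cnj (W $$ (k,i)) * W $$ (k,0))"
      unfolding sum_distrib_left by (rule sum.cong) (use AW0 in auto)
    also have "(\<Sum>k<N. cnj (W $$ (k,i)) * W $$ (k,0)) = (adj W * W) $$ (i,0)"
      by (rule adjmult_entry[symmetric, OF W W i]) (simp add: N_def)
    finally show ?thesis using WW i by (simp add: N_def)
  qed
  have A'adj: "A' $$ (i,j) = cnj (A' $$ (j,i))" if "i < N" "j < N" for i j
  proof -
    have "A' $$ (i,j) = adj A' $$ (i,j)" using hA' by simp
    also have "\<dots> = cnj (A' $$ (j,i))" using A' that by simp
    finally show ?thesis .
  qed
  have er: "e = complex_of_real (Re e)"
  proof -
    have "e = cnj e" using A'adj[of 0 0] A'0[of 0] by (simp add: N_def)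
    then show ?thesis by (simp add: complex_eq_iff)
  qed
  have A'0': "A' $$ (0,j) = (if j = 0 then e else 0)" if j: "j < N" for j
    using A'adj[of 0 j] A'0[OF j] A'0[of 0] j by (auto simp: N_def)
  define A3 where "A3 = mat n n (\<lambda>(i,j). A' $$ (Suc i, Suc j))"
  have "hermitian n A3"
    unfolding hermitian_def
  proof
    show "A3 \<in> carrier_mat n n" by (simp add: A3_def)
    show "adj A3 = A3"
    proof (rule eq_matI)
      fix i j assume "i < dim_row A3" "j < dim_col A3"
      then have i: "i < n" and j: "j < n" by (auto simp: A3_def)
      have "A' $$ (Suc i, Suc j) = cnj (A' $$ (Suc j, Suc i))" using A'adj[of "Suc i" "Suc j"] i j by (simp add: N_def)
      then show "adj A3 $$ (i, j) = A3 $$ (i, j)" using i j by (simp add: A3_def)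
    qed (auto simp: A3_def)
  qed
  from Suc.IH[OF this] obtain U3 d3 where U3: "unitary n U3" and A3d: "A3 = U3 * diag_of n d3 * adj U3"
    by blast
  have U3c: "U3 \<in> carrier_mat n n" and U3U: "adj U3 * U3 = 1\<^sub>m n" using U3 by (auto simp: unitary_def)
  define V where "V = mat N N (\<lambda>(i,j). if i = 0 then (if j = 0 then 1 else 0) else if j = 0 then 0 else U3 $$ (i-1,j-1))"
  have V: "V \<in> carrier_mat N N" by (simp add: V_def)
  have VV: "adj V * V = 1\<^sub>m N"
  proof (rule eq_matI)
    fix i j assume "i < dim_row (1\<^sub>m N)" "j < dim_col (1\<^sub>m N)"
    then have i: "i < N" and j: "j < N" by auto
    have "(adj V * V) $$ (i,j) = (\<Sum>k<N. cnj (V $$ (k,i)) * V $$ (k,j))"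
      by (rule adjmult_entry[OF V V i j])
    also have "\<dots> = cnj (V $$ (0,i)) * V $$ (0,j) + (\<Sum>k<n. cnj (V $$ (Suc k,i)) * V $$ (Suc k,j))"
      unfolding N_def by (rule sum.lessThan_Suc_shift)
    also have "\<dots> = 1\<^sub>m N $$ (i,j)"
    proof (cases "i = 0 \<or> j = 0")
      case True
      then show ?thesis using i j by (auto simp: V_def N_def)
    next
      case False
      then obtain i' j' where ii: "i = Suc i'" and jj: "j = Suc j'" by (cases i; cases j) auto
      have i': "i' < n" and j': "j' < n" using i j ii jj by (auto simp: N_def)
      have "(\<Sum>k<n. cnj (V $$ (Suc k,i)) * V $$ (Suc k,j)) = (\<Sum>k<n. cnj (U3 $$ (k,i')) * U3 $$ (k,j'))"
        by (rule sum.cong) (use i j ii jj in \<open>auto simp: V_def N_def\<close>)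
      also have "\<dots> = (adj U3 * U3) $$ (i',j')" by (rule adjmult_entry[symmetric, OF U3c U3c i' j'])
      finally show ?thesis using U3U i' j' ii jj by (simp add: V_def N_def)
    qed
    finally show "(adj V * V) $$ (i,j) = 1\<^sub>m N $$ (i,j)" .
  qed (use V in auto)
  have VV': "V * adj V = 1\<^sub>m N"
    by (rule mat_mult_left_right_inverse[OF adj_carrier[OF V] V VV])
  define d where "d i = (if i = 0 then Re e else d3 (i - 1))" for i
  have A'V: "A' = V * diag_of N d * adj V"
  proof (rule eq_matI)
    fix i j assume "i < dim_row (V * diag_of N d * adj V)" "j < dim_col (V * diag_of N d * adj V)"
    then have i: "i < N" and j: "j < N" using V by auto
    have "(V * diag_of N d * adj V) $$ (i,j) = (\<Sum>k<N. V $$ (i,k) * complex_of_real (d k) * cnj (V $$ (j,k)))"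
      by (rule diag_entry[OF V i j])
    also have "\<dots> = V $$ (i,0) * complex_of_real (d 0) * cnj (V $$ (j,0)) + (\<Sum>k<n. V $$ (i,Suc k) * complex_of_real (d (Suc k)) * cnj (V $$ (j,Suc k)))"
      unfolding N_def by (rule sum.lessThan_Suc_shift)
    also have "\<dots> = A' $$ (i,j)"
    proof (cases "i = 0 \<or> j = 0")
      case True
      then show ?thesis using i j A'0 A'0' er[symmetric] by (auto simp: V_def N_def d_def)
    next
      case False
      then obtain i' j' where ii: "i = Suc i'" and jj: "j = Suc j'" by (cases i; cases j) auto
      have i': "i' < n" and j': "j' < n" using i j ii jj by (auto simp: N_def)
      have "(\<Sum>k<n. V $$ (i,Suc k) * complex_of_real (d (Suc k)) * cnj (V $$ (j,Suc k))) = (\<Sum>k<n. U3 $$ (i',k) * complex_of_real (d3 k) * cnj (U3 $$ (j',k)))"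
        by (rule sum.cong) (use i j ii jj in \<open>auto simp: V_def N_def d_def\<close>)
      also have "\<dots> = A3 $$ (i',j')" unfolding A3d by (rule diag_entry[symmetric, OF U3c i' j'])
      finally show ?thesis using i' j' ii jj by (simp add: V_def N_def A3_def)
    qed
    finally show "A' $$ (i,j) = (V * diag_of N d * adj V) $$ (i,j)" by simp
  qed (use A' V in \<open>auto simp: diag_of_def\<close>)
  define U where "U = W * V"
  have U: "U \<in> carrier_mat N N" using W V by (simp add: U_def)
  have adjU: "adj U = adj V * adj W" unfolding U_def by (rule adj_mult[OF W V])
  have D: "diag_of N d \<in> carrier_mat N N" by (simp add: diag_of_def)
  have aV: "adj V \<in> carrier_mat N N" and aW: "adj W \<in> carrier_mat N N" using V W by auto
  have aVW: "adj V * adj W \<in> carrier_mat N N" using mult_carrier_mat[OF aV aW] .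
  have "U * adj U = W * (V * (adj V * adj W))"
    unfolding adjU unfolding U_def by (rule assoc_mult_mat[OF W V aVW])
  also have "V * (adj V * adj W) = (V * adj V) * adj W" by (rule assoc_mult_mat[symmetric, OF V aV aW])
  also have "\<dots> = adj W" using VV' left_mult_one_mat[OF aW] by simp
  finally have UU': "U * adj U = 1\<^sub>m N" using WW' by simp
  have "adj U * U = adj V * (adj W * (W * V))"
    unfolding adjU unfolding U_def by (rule assoc_mult_mat[OF aV aW mult_carrier_mat[OF W V]])
  also have "adj W * (W * V) = (adj W * W) * V" by (rule assoc_mult_mat[symmetric, OF aW W V])
  also have "\<dots> = V" using WW left_mult_one_mat[OF V] by simp
  finally have UU: "adj U * U = 1\<^sub>m N" using VV by simp
  have AW: "A * W \<in> carrier_mat N N" using A W by simp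
  have "W * A' * adj W = W * (adj W * (A * W)) * adj W" unfolding A'_def ..
  also have "W * (adj W * (A * W)) = (W * adj W) * (A * W)" by (rule assoc_mult_mat[symmetric, OF W aW AW])
  also have "\<dots> = A * W" using WW' left_mult_one_mat[OF AW] by simp
  also have "A * W * adj W = A * (W * adj W)" by (rule assoc_mult_mat[OF A W aW])
  also have "\<dots> = A" using WW' right_mult_one_mat[OF A] by simp
  finally have AA': "A = W * A' * adj W" by simp
  have VD: "V * diag_of N d \<in> carrier_mat N N" using V D by simp
  have "W * A' * adj W = W * (V * diag_of N d * adj V) * adj W" using A'V by simp
  also have "W * (V * diag_of N d * adj V) = W * (V * diag_of N d) * adj V"
    by (rule assoc_mult_mat[symmetric, OF W VD aV])
  also have "W * (V * diag_of N d) = U * diag_of N d"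
    unfolding U_def by (rule assoc_mult_mat[symmetric, OF W V D])
  also have "U * diag_of N d * adj V * adj W = U * diag_of N d * (adj V * adj W)"
    by (rule assoc_mult_mat[OF mult_carrier_mat[OF U D] aV aW])
  finally have "A = U * diag_of N d * adj U" using AA' adjU by simp
  then show ?case using U UU UU' unfolding unitary_def N_def by blast
qed

lemma swap3: "(\<Sum>a\<in>A. \<Sum>j\<in>J. \<Sum>b\<in>B. f a j b) = (\<Sum>j\<in>J. \<Sum>b\<in>B. \<Sum>a\<in>A. f a j b)"
  by (rule trans[OF sum.swap], rule sum.cong[OF refl], rule sum.swap)

lemma rho_vec:
  assumes rho: "\<rho> = mat n n (\<lambda>(a,b). \<Sum>i<r. complex_of_real (p i) * (v i $ a) * cnj (v i $ b))"
    and vd: "\<forall>i<r. v i \<in> carrier_vec n" and x: "x \<in> carrier_vec n" and a: "a < n"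
  shows "(\<rho> *\<^sub>v x) $ a = (\<Sum>i<r. complex_of_real (p i) * v i $ a * cinner (v i) x)"
proof -
  have "(\<rho> *\<^sub>v x) $ a = (\<Sum>b<n. (\<Sum>i<r. complex_of_real (p i) * (v i $ a) * cnj (v i $ b)) * x $ b)"
    using rho x a by (auto simp: scalar_prod_def atLeast0LessThan intro!: sum.cong)
  also have "\<dots> = (\<Sum>i<r. \<Sum>b<n. complex_of_real (p i) * (v i $ a) * (cnj (v i $ b) * x $ b))"
    by (simp add: sum_distrib_right sum.swap[of _ "{..<n}"] mult.assoc)
  also have "\<dots> = (\<Sum>i<r. complex_of_real (p i) * v i $ a * cinner (v i) x)"
    using vd by (auto simp: cinner_def sum_distrib_left intro!: sum.cong)
  finally show ?thesis .
qed

lemma trace_rho: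
  assumes rho: "\<rho> = mat n n (\<lambda>(a,b). \<Sum>i<r. complex_of_real (p i) * (v i $ a) * cnj (v i $ b))"
    and vd: "\<forall>i<r. v i \<in> carrier_vec n" and L: "L \<in> carrier_mat n n"
  shows "mtrace (\<rho> * L) = (\<Sum>i<r. complex_of_real (p i) * cinner (v i) (L *\<^sub>v v i))"
proof -
  have rc: "\<rho> \<in> carrier_mat n n" using rho by simp
  have "mtrace (\<rho> * L) = (\<Sum>a<n. \<Sum>b<n. (\<Sum>i<r. complex_of_real (p i) * (v i $ a) * cnj (v i $ b)) * L $$ (b,a))"
    unfolding mtrace_def using rc
    by (intro sum.cong) (simp, subst mult_entry[OF rc L], auto simp: rho)
  also have "\<dots> = (\<Sum>i<r. \<Sum>b<n. \<Sum>a<n. complex_of_real (p i) * (cnj (v i $ b) * (L $$ (b,a) * v i $ a)))"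
  proof -
    have "(\<Sum>a<n. \<Sum>b<n. (\<Sum>i<r. complex_of_real (p i) * (v i $ a) * cnj (v i $ b)) * L $$ (b,a))
       = (\<Sum>a<n. \<Sum>b<n. \<Sum>i<r. complex_of_real (p i) * (v i $ a) * cnj (v i $ b) * L $$ (b,a))"
      by (simp only: sum_distrib_right)
    also have "\<dots> = (\<Sum>a<n. \<Sum>i<r. \<Sum>b<n. complex_of_real (p i) * (v i $ a) * cnj (v i $ b) * L $$ (b,a))"
      by (rule sum.cong[OF refl], rule sum.swap)
    also have "\<dots> = (\<Sum>i<r. \<Sum>b<n. \<Sum>a<n. complex_of_real (p i) * (v i $ a) * cnj (v i $ b) * L $$ (b,a))"
      by (rule swap3)
    also have "\<dots> = (\<Sum>i<r. \<Sum>b<n. \<Sum>a<n. complex_of_real (p i) * (cnj (v i $ b) * (L $$ (b,a) * v i $ a)))"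
      by (simp add: mult_ac)
    finally show ?thesis .
  qed
  also have "\<dots> = (\<Sum>i<r. complex_of_real (p i) * cinner (v i) (L *\<^sub>v v i))"
  proof (rule sum.cong[OF refl])
    fix i assume i: "i \<in> {..<r}"
    then have vi: "v i \<in> carrier_vec n" using vd by auto
    have "cinner (v i) (L *\<^sub>v v i) = (\<Sum>b<n. cnj (v i $ b) * (\<Sum>a<n. L $$ (b,a) * v i $ a))"
      using vi L by (auto simp: cinner_def scalar_prod_def atLeast0LessThan intro!: sum.cong)
    then show "(\<Sum>b<n. \<Sum>a<n. complex_of_real (p i) * (cnj (v i $ b) * (L $$ (b,a) * v i $ a))) = complex_of_real (p i) * cinner (v i) (L *\<^sub>v v i)"
      by (simp add: sum_distrib_left)
  qed
  finally show ?thesis .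
qed

lemma trace_lin:
  assumes A: "\<forall>i<r. A i \<in> carrier_mat m m" and M: "M \<in> carrier_mat m m"
  shows "mtrace (mat m m (\<lambda>(a,b). \<Sum>i<r. c i * A i $$ (a,b)) * M) = (\<Sum>i<r. c i * mtrace (A i * M))"
proof -
  have X: "mat m m (\<lambda>(a,b). \<Sum>i<r. c i * A i $$ (a,b)) \<in> carrier_mat m m" by simp
  have "mtrace (mat m m (\<lambda>(a,b). \<Sum>i<r. c i * A i $$ (a,b)) * M) = (\<Sum>a<m. \<Sum>b<m. (\<Sum>i<r. c i * A i $$ (a,b)) * M $$ (b,a))"
    unfolding mtrace_def using X
    by (intro sum.cong) (simp, subst mult_entry[OF X M], auto)
  also have "\<dots> = (\<Sum>i<r. \<Sum>a<m. \<Sum>b<m. c i * (A i $$ (a,b) * M $$ (b,a)))"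
  proof -
    have "(\<Sum>a<m. \<Sum>b<m. (\<Sum>i<r. c i * A i $$ (a,b)) * M $$ (b,a)) = (\<Sum>a<m. \<Sum>b<m. \<Sum>i<r. c i * A i $$ (a,b) * M $$ (b,a))"
      by (simp only: sum_distrib_right)
    also have "\<dots> = (\<Sum>a<m. \<Sum>i<r. \<Sum>b<m. c i * A i $$ (a,b) * M $$ (b,a))"
      by (rule sum.cong[OF refl], rule sum.swap)
    also have "\<dots> = (\<Sum>i<r. \<Sum>a<m. \<Sum>b<m. c i * A i $$ (a,b) * M $$ (b,a))"
      by (rule sum.swap)
    also have "\<dots> = (\<Sum>i<r. \<Sum>a<m. \<Sum>b<m. c i * (A i $$ (a,b) * M $$ (b,a)))"
      by (simp add: mult_ac)
    finally show ?thesis .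
  qed
  also have "\<dots> = (\<Sum>i<r. c i * mtrace (A i * M))"
  proof (rule sum.cong[OF refl])
    fix i assume "i \<in> {..<r}"
    then have Ai: "A i \<in> carrier_mat m m" using A by auto
    have "mtrace (A i * M) = (\<Sum>a<m. \<Sum>b<m. A i $$ (a,b) * M $$ (b,a))"
      unfolding mtrace_def using Ai
      by (intro sum.cong) (simp, subst mult_entry[OF Ai M], auto)
    then show "(\<Sum>a<m. \<Sum>b<m. c i * (A i $$ (a,b) * M $$ (b,a))) = c i * mtrace (A i * M)"
      by (simp add: sum_distrib_left)
  qed
  finally show ?thesis .
qed

lemma diag_vec:
  assumes "w \<in> carrier_vec N" "k < N"
  shows "(diag_of N f *\<^sub>v w) $ k = complex_of_real (f k) * w $ k"
proof -
  have "(diag_of N f *\<^sub>v w) $ k = (\<Sum>l<N. (if k = l then complex_of_real (f k) else 0) * w $ l)"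
    using assms by (auto simp: diag_of_def scalar_prod_def atLeast0LessThan intro!: sum.cong)
  also have "\<dots> = (\<Sum>l\<in>{..<N}. (if k = l then complex_of_real (f k) * w $ k else 0))"
    by (rule sum.cong) auto
  finally show ?thesis using assms by simp
qed

lemma mat_ln_spec:
  assumes "hermitian N A"
  shows "\<exists>U d. unitary N U \<and> A = U * diag_of N d * adj U \<and> mat_ln A = U * diag_of N (\<lambda>i. ln_supp (d i)) * adj U"
proof -
  have dr: "dim_row A = N" using assms by (auto simp: hermitian_def)
  obtain U d where "unitary N U" "A = U * diag_of N d * adj U" using spectral[OF assms] by blast
  then have ex: "\<exists>M. \<exists>U d. spectral_decomp N A U d \<and> M = U * diag_of N (\<lambda>i. ln_supp (d i)) * adj U"
    unfolding spectral_decomp_def by blast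
  show ?thesis
    using someI_ex[OF ex] unfolding mat_ln_def mat_fun_def dr spectral_decomp_def by blast
qed

lemma ln_eigen:
  assumes U: "unitary N U" and Ad: "A = U * diag_of N d * adj U"
    and Ld: "L = U * diag_of N (\<lambda>i. ln_supp (d i)) * adj U"
    and x: "x \<in> carrier_vec N" and Ax: "A *\<^sub>v x = complex_of_real q \<cdot>\<^sub>v x" and q: "q > 0"
  shows "L *\<^sub>v x = complex_of_real (ln q) \<cdot>\<^sub>v x"
proof -
  have Uc: "U \<in> carrier_mat N N" and UU: "adj U * U = 1\<^sub>m N" and UU': "U * adj U = 1\<^sub>m N"
    using U by (auto simp: unitary_def)
  have aU: "adj U \<in> carrier_mat N N" using Uc by simp
  have D: "diag_of N d \<in> carrier_mat N N" and Dl: "diag_of N (\<lambda>i. ln_supp (d i)) \<in> carrier_mat N N"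
    by (auto simp: diag_of_def)
  define w where "w = adj U *\<^sub>v x"
  have w: "w \<in> carrier_vec N" using aU x by (simp add: w_def)
  have "adj U *\<^sub>v (A *\<^sub>v x) = complex_of_real q \<cdot>\<^sub>v w"
    unfolding Ax w_def using aU x by (simp add: mult_mat_vec)
  moreover have "adj U *\<^sub>v (A *\<^sub>v x) = diag_of N d *\<^sub>v w"
  proof -
    have "adj U *\<^sub>v (A *\<^sub>v x) = adj U *\<^sub>v (U *\<^sub>v (diag_of N d *\<^sub>v (adj U *\<^sub>v x)))"
    proof -
      have "A *\<^sub>v x = (U * diag_of N d) *\<^sub>v w"
        unfolding Ad w_def by (rule assoc_mult_mat_vec[OF mult_carrier_mat[OF Uc D] aU x])
      also have "\<dots> = U *\<^sub>v (diag_of N d *\<^sub>v w)" by (rule assoc_mult_mat_vec[OF Uc D w])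
      finally show ?thesis by (simp add: w_def)
    qed
    also have "\<dots> = (adj U * U) *\<^sub>v (diag_of N d *\<^sub>v w)"
      using assoc_mult_mat_vec[OF aU Uc mult_mat_vec_carrier[OF D w]] by (simp add: w_def)
    also have "\<dots> = diag_of N d *\<^sub>v w" using UU D w by simp
    finally show ?thesis .
  qed
  ultimately have Dw: "diag_of N d *\<^sub>v w = complex_of_real q \<cdot>\<^sub>v w" by simp
  have Dlw: "diag_of N (\<lambda>i. ln_supp (d i)) *\<^sub>v w = complex_of_real (ln q) \<cdot>\<^sub>v w"
  proof (rule eq_vecI)
    fix k assume "k < dim_vec (complex_of_real (ln q) \<cdot>\<^sub>v w)"
    then have k: "k < N" using w by simp
    have e: "complex_of_real (d k) * w $ k = complex_of_real q * w $ k"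
      using arg_cong[OF Dw, of "\<lambda>z. z $ k"] diag_vec[OF w k] w k by simp
    have "complex_of_real (ln_supp (d k)) * w $ k = complex_of_real (ln q) * w $ k"
    proof (cases "w $ k = 0")
      case False
      then have "d k = q" using e by simp
      then show ?thesis using q by (simp add: ln_supp_def)
    qed simp
    then show "(diag_of N (\<lambda>i. ln_supp (d i)) *\<^sub>v w) $ k = (complex_of_real (ln q) \<cdot>\<^sub>v w) $ k"
      using diag_vec[OF w k] w k by simp
  qed (use w Dl in simp)
  have "L *\<^sub>v x = U *\<^sub>v (diag_of N (\<lambda>i. ln_supp (d i)) *\<^sub>v w)"
    unfolding Ld using assoc_mult_mat_vec[OF mult_carrier_mat[OF Uc Dl] aU x] assoc_mult_mat_vec[OF Uc Dl w]
    by (simp add: w_def)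
  also have "\<dots> = complex_of_real (ln q) \<cdot>\<^sub>v (U *\<^sub>v w)" unfolding Dlw using Uc w by (simp add: mult_mat_vec)
  also have "U *\<^sub>v w = x"
    unfolding w_def using assoc_mult_mat_vec[OF Uc aU x] UU' x by simp
  finally show ?thesis .
qed

lemma jensen_exp:
  fixes p y :: "nat \<Rightarrow> real"
  assumes p: "\<forall>i<r. p i \<ge> 0" and ps: "(\<Sum>i<r. p i) = 1"
  shows "exp (\<Sum>i<r. p i * y i) \<le> (\<Sum>i<r. p i * exp (y i))"
proof -
  define \<mu> where "\<mu> = (\<Sum>i<r. p i * y i)"
  have "(\<Sum>i<r. p i * (exp \<mu> * (1 + (y i - \<mu>)))) \<le> (\<Sum>i<r. p i * exp (y i))"
  proof (rule sum_mono)
    fix i assume "i \<in> {..<r}"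
    then have pi: "p i \<ge> 0" using p by auto
    have "exp \<mu> * (1 + (y i - \<mu>)) \<le> exp \<mu> * exp (y i - \<mu>)"
      by (rule mult_left_mono) (auto simp: exp_ge_add_one_self)
    also have "\<dots> = exp (y i)" by (simp add: exp_diff)
    finally show "p i * (exp \<mu> * (1 + (y i - \<mu>))) \<le> p i * exp (y i)"
      using pi by (simp add: mult_left_mono)
  qed
  moreover have "(\<Sum>i<r. p i * (exp \<mu> * (1 + (y i - \<mu>)))) = exp \<mu> * ((\<Sum>i<r. p i) + (\<Sum>i<r. p i * y i) - \<mu> * (\<Sum>i<r. p i))"
    by (simp add: sum_distrib_left sum_distrib_right ring_distribs sum.distrib sum_subtractf mult_ac)
  ultimately show ?thesis using ps unfolding \<mu>_def by simp
qed

theorem theorem1: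
  fixes n m r :: nat
    and \<Phi> :: "complex mat \<Rightarrow> complex mat"
    and p :: "nat \<Rightarrow> real"
    and v :: "nat \<Rightarrow> complex vec"
    and \<rho>_in \<rho>_out :: "complex mat"
  assumes channel: "quantum_channel n m \<Phi>"
    and v_dim: "\<forall>i<r. v i \<in> carrier_vec n"
    and v_orthonormal: "\<forall>i<r. \<forall>j<r. cinner (v i) (v j) = (if i = j then 1 else 0)"
    and p_pos: "\<forall>i<r. 0 < p i \<and> p i \<le> 1"
    and p_sum: "(\<Sum>i<r. p i) = 1"
    and rho_in_def: "\<rho>_in = mat n n (\<lambda>(a,b). \<Sum>i<r. complex_of_real (p i) * (v i $ a) * cnj (v i $ b))"
    and rho_out_def: "\<rho>_out = \<Phi> \<rho>_in"
  shows "(\<Sum>i<r. p i * exp (- (cross_entropy (\<Phi> (ketbra (v i))) \<rho>_out + ln (p i))))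
           = (\<Sum>i<r. exp (- cross_entropy (\<Phi> (ketbra (v i))) \<rho>_out))
         \<and> vn_entropy \<rho>_out - vn_entropy \<rho>_in
           \<ge> - ln (\<Sum>i<r. exp (- cross_entropy (\<Phi> (ketbra (v i))) \<rho>_out))"
proof -
  define C where "C i = cross_entropy (\<Phi> (ketbra (v i))) \<rho>_out" for i
  have lin: "Defs.linear_map n m \<Phi>" and CP: "completely_positive n m \<Phi>"
    using channel by (auto simp: quantum_channel_def)
  have Pc: "\<And>A. A \<in> carrier_mat n n \<Longrightarrow> \<Phi> A \<in> carrier_mat m m"
    and Padd: "\<And>A B. A \<in> carrier_mat n n \<Longrightarrow> B \<in> carrier_mat n n \<Longrightarrow> \<Phi> (A + B) = \<Phi> A + \<Phi> B"
    and Psm: "\<And>c A. A \<in> carrier_mat n n \<Longrightarrow> \<Phi> (c \<cdot>\<^sub>m A) = c \<cdot>\<^sub>m \<Phi> A"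
    using lin unfolding Defs.linear_map_def by blast+
  have rc: "\<rho>_in \<in> carrier_mat n n" using rho_in_def by simp
  have Kc: "\<And>i. i < r \<Longrightarrow> ketbra (v i) \<in> carrier_mat n n" using v_dim by (auto simp: ketbra_def)
  have part1: "p i * exp (- (C i + ln (p i))) = exp (- C i)" if "i < r" for i
  proof -
    have pi: "p i > 0" using p_pos that by auto
    have "exp (- (C i + ln (p i))) = exp (- C i) / p i"
      using pi by (simp add: exp_diff)
    then show ?thesis using pi by simp
  qed
  have herm_in: "hermitian n \<rho>_in"
    unfolding hermitian_def
  proof
    show "\<rho>_in \<in> carrier_mat n n" by (rule rc)
    show "adj \<rho>_in = \<rho>_in"
      by (rule eq_matI) (auto simp: rho_in_def mult_ac)
  qed
  have psd_in: "psd n \<rho>_in"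
    unfolding psd_def
  proof (rule conjI[OF herm_in], intro ballI)
    fix x :: "complex vec" assume x: "x \<in> carrier_vec n"
    have "cinner x (\<rho>_in *\<^sub>v x) = (\<Sum>a<n. cnj (x $ a) * (\<Sum>i<r. complex_of_real (p i) * v i $ a * cinner (v i) x))"
    proof -
      have "cinner x (\<rho>_in *\<^sub>v x) = (\<Sum>a<n. cnj (x $ a) * (\<rho>_in *\<^sub>v x) $ a)"
        using x by (simp add: cinner_def)
      also have "\<dots> = (\<Sum>a<n. cnj (x $ a) * (\<Sum>i<r. complex_of_real (p i) * v i $ a * cinner (v i) x))"
        by (rule sum.cong[OF refl]) (subst rho_vec[OF rho_in_def v_dim x], auto)
      finally show ?thesis .
    qed
    also have "\<dots> = (\<Sum>i<r. complex_of_real (p i) * cinner (v i) x * (\<Sum>a<n. cnj (x $ a) * v i $ a))"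
      by (simp add: sum_distrib_left sum_distrib_right sum.swap[of _ "{..<n}" "{..<r}"] mult_ac)
    also have "\<dots> = (\<Sum>i<r. complex_of_real (p i * (cmod (cinner (v i) x))^2))"
    proof (rule sum.cong[OF refl])
      fix i assume "i \<in> {..<r}"
      then have vi: "v i \<in> carrier_vec n" using v_dim by auto
      have "(\<Sum>a<n. cnj (x $ a) * v i $ a) = cnj (cinner (v i) x)"
        using vi by (simp add: cinner_def mult.commute)
      then show "complex_of_real (p i) * cinner (v i) x * (\<Sum>a<n. cnj (x $ a) * v i $ a) = complex_of_real (p i * (cmod (cinner (v i) x))^2)"
        using cnj_mult_self[of "cinner (v i) x"] by (simp add: mult_ac)
    qed
    also have "\<dots> = complex_of_real (\<Sum>i<r. p i * (cmod (cinner (v i) x))^2)" by simp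
    finally have eq: "cinner x (\<rho>_in *\<^sub>v x) = complex_of_real (\<Sum>i<r. p i * (cmod (cinner (v i) x))^2)" .
    have "(\<Sum>i<r. p i * (cmod (cinner (v i) x))^2) \<ge> 0"
      using p_pos by (intro sum_nonneg) auto
    then show "Im (cinner x (\<rho>_in *\<^sub>v x)) = 0 \<and> 0 \<le> Re (cinner x (\<rho>_in *\<^sub>v x))"
      unfolding eq by simp
  qed
  have "psd (1 * m) (ampliate 1 n m \<Phi> \<rho>_in)" using CP psd_in unfolding completely_positive_def by (metis mult_1)
  moreover have "ampliate 1 n m \<Phi> \<rho>_in = \<rho>_out"
  proof -
    have b: "block n \<rho>_in 0 0 = \<rho>_in" by (rule eq_matI) (use rc in \<open>auto simp: block_def\<close>)
    show ?thesis using Pc[OF rc] unfolding rho_out_def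
      by (intro eq_matI) (auto simp: ampliate_def b)
  qed
  ultimately have herm_out: "hermitian m \<rho>_out" by (simp add: psd_def)
  obtain U d where U: "unitary n U" and Ud: "\<rho>_in = U * diag_of n d * adj U"
    and Ld: "mat_ln \<rho>_in = U * diag_of n (\<lambda>i. ln_supp (d i)) * adj U"
    using mat_ln_spec[OF herm_in] by blast
  obtain U' d' where U': "unitary m U'"
    and Ld': "mat_ln \<rho>_out = U' * diag_of m (\<lambda>i. ln_supp (d' i)) * adj U'"
    using mat_ln_spec[OF herm_out] by blast
  have Lc: "mat_ln \<rho>_in \<in> carrier_mat n n" using U unfolding Ld unitary_def by (auto simp: diag_of_def)
  have Mc: "mat_ln \<rho>_out \<in> carrier_mat m m" using U' unfolding Ld' unitary_def by (auto simp: diag_of_def)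
  have eig: "\<rho>_in *\<^sub>v v j = complex_of_real (p j) \<cdot>\<^sub>v v j" if j: "j < r" for j
  proof (rule eq_vecI)
    have vj: "v j \<in> carrier_vec n" using v_dim j by auto
    fix a assume "a < dim_vec (complex_of_real (p j) \<cdot>\<^sub>v v j)"
    then have a: "a < n" using vj by simp
    have "(\<rho>_in *\<^sub>v v j) $ a = (\<Sum>i<r. complex_of_real (p i) * v i $ a * cinner (v i) (v j))"
      by (rule rho_vec[OF rho_in_def v_dim vj a])
    also have "\<dots> = (\<Sum>i<r. if i = j then complex_of_real (p j) * v j $ a else 0)"
      by (rule sum.cong) (use v_orthonormal j in auto)
    also have "\<dots> = (complex_of_real (p j) \<cdot>\<^sub>v v j) $ a" using j a vj by simp
    finally show "(\<rho>_in *\<^sub>v v j) $ a = (complex_of_real (p j) \<cdot>\<^sub>v v j) $ a" .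
  qed (use rc v_dim j in auto)
  have Lv: "mat_ln \<rho>_in *\<^sub>v v j = complex_of_real (ln (p j)) \<cdot>\<^sub>v v j" if j: "j < r" for j
    by (rule ln_eigen[OF U Ud Ld]) (use v_dim j eig p_pos in auto)
  have Sin: "vn_entropy \<rho>_in = - (\<Sum>i<r. p i * ln (p i))"
  proof -
    have "mtrace (\<rho>_in * mat_ln \<rho>_in) = (\<Sum>i<r. complex_of_real (p i) * cinner (v i) (mat_ln \<rho>_in *\<^sub>v v i))"
      by (rule trace_rho[OF rho_in_def v_dim Lc])
    also have "\<dots> = (\<Sum>i<r. complex_of_real (p i * ln (p i)))"
    proof (rule sum.cong[OF refl])
      fix i assume i: "i \<in> {..<r}"
      then have vi: "v i \<in> carrier_vec n" using v_dim by auto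
      have "cinner (v i) (mat_ln \<rho>_in *\<^sub>v v i) = complex_of_real (ln (p i)) * cinner (v i) (v i)"
        unfolding Lv[OF i[simplified]] using vi by (simp add: cinner_def sum_distrib_left mult_ac)
      then show "complex_of_real (p i) * cinner (v i) (mat_ln \<rho>_in *\<^sub>v v i) = complex_of_real (p i * ln (p i))"
        using v_orthonormal i by simp
    qed
    finally show ?thesis unfolding vn_entropy_def by simp
  qed
  have linK: "\<Phi> (mat n n (\<lambda>(a,b). \<Sum>i<k. complex_of_real (p i) * (v i $ a) * cnj (v i $ b)))
     = mat m m (\<lambda>(a,b). \<Sum>i<k. complex_of_real (p i) * \<Phi> (ketbra (v i)) $$ (a,b))" if "k \<le> r" for k
    using that
  proof (induction k)
    case 0
    have z: "mat n n (\<lambda>(a,b). \<Sum>i<0. complex_of_real (p i) * (v i $ a) * cnj (v i $ b)) = 0 \<cdot>\<^sub>m 0\<^sub>m n n"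
      by (rule eq_matI) auto
    show ?case unfolding z Psm[OF zero_carrier_mat]
      by (rule eq_matI) (use Pc[OF zero_carrier_mat[of n n]] in auto)
  next
    case (Suc k)
    have kr: "k < r" using Suc.prems by simp
    have vk: "v k \<in> carrier_vec n" using v_dim kr by auto
    define X where "X = mat n n (\<lambda>(a,b). \<Sum>i<k. complex_of_real (p i) * (v i $ a) * cnj (v i $ b))"
    have X: "X \<in> carrier_mat n n" by (simp add: X_def)
    have KK: "ketbra (v k) \<in> carrier_mat n n" by (rule Kc[OF kr])
    have split: "mat n n (\<lambda>(a,b). \<Sum>i<Suc k. complex_of_real (p i) * (v i $ a) * cnj (v i $ b))
        = X + complex_of_real (p k) \<cdot>\<^sub>m ketbra (v k)"
      by (rule eq_matI) (use vk in \<open>auto simp: X_def ketbra_def mult_ac\<close>)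
    have IH: "\<Phi> X = mat m m (\<lambda>(a,b). \<Sum>i<k. complex_of_real (p i) * \<Phi> (ketbra (v i)) $$ (a,b))"
      unfolding X_def by (rule Suc.IH) (use Suc.prems in simp)
    show ?case unfolding split Padd[OF X smult_carrier_mat[OF KK]] Psm[OF KK] IH
      by (rule eq_matI) (use Pc[OF KK] in auto)
  qed
  have Pout: "\<rho>_out = mat m m (\<lambda>(a,b). \<Sum>i<r. complex_of_real (p i) * \<Phi> (ketbra (v i)) $$ (a,b))"
    unfolding rho_out_def rho_in_def using linK[of r] by simp
  have Sout: "vn_entropy \<rho>_out = (\<Sum>i<r. p i * C i)"
  proof -
    have "mtrace (\<rho>_out * mat_ln \<rho>_out) = (\<Sum>i<r. complex_of_real (p i) * mtrace (\<Phi> (ketbra (v i)) * mat_ln \<rho>_out))"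
    proof -
      define M where "M = mat_ln \<rho>_out"
      have Mc': "M \<in> carrier_mat m m" using Mc by (simp add: M_def)
      have "mtrace (mat m m (\<lambda>(a,b). \<Sum>i<r. complex_of_real (p i) * \<Phi> (ketbra (v i)) $$ (a,b)) * M)
         = (\<Sum>i<r. complex_of_real (p i) * mtrace (\<Phi> (ketbra (v i)) * M))"
        by (rule trace_lin) (use Pc Kc Mc' in auto)
      then show ?thesis unfolding M_def Pout[symmetric] .
    qed
    then show ?thesis unfolding vn_entropy_def C_def cross_entropy_def
      by (simp add: Re_sum sum_negf)
  qed
  define y where "y i = - C i - ln (p i)" for i
  have mu: "(\<Sum>i<r. p i * y i) = - vn_entropy \<rho>_out + vn_entropy \<rho>_in"
  proof -
    have "(\<Sum>i<r. p i * y i) = (\<Sum>i<r. - (p i * C i) - p i * ln (p i))"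
      unfolding y_def by (rule sum.cong) (auto simp: right_diff_distrib)
    also have "\<dots> = - (\<Sum>i<r. p i * C i) - (\<Sum>i<r. p i * ln (p i))"
      by (simp add: sum_subtractf sum_negf)
    finally show ?thesis unfolding Sout Sin by simp
  qed
  have X: "(\<Sum>i<r. exp (- C i)) = (\<Sum>i<r. p i * exp (y i))"
  proof (rule sum.cong[OF refl])
    fix i assume "i \<in> {..<r}"
    then have "p i * exp (- (C i + ln (p i))) = exp (- C i)" using part1 by auto
    moreover have "y i = - (C i + ln (p i))" by (simp add: y_def)
    ultimately show "exp (- C i) = p i * exp (y i)" by simp
  qed
  have J: "exp (\<Sum>i<r. p i * y i) \<le> (\<Sum>i<r. exp (- C i))"
    unfolding X by (rule jensen_exp) (use p_pos p_sum in auto)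
  have "(\<Sum>i<r. p i * y i) \<le> ln (\<Sum>i<r. exp (- C i))"
  proof -
    have Xpos: "0 < (\<Sum>i<r. exp (- C i))" by (rule order_less_le_trans[OF exp_gt_zero J])
    show ?thesis using ln_le_cancel_iff[OF exp_gt_zero Xpos] J by simp
  qed
  then have ineq: "vn_entropy \<rho>_out - vn_entropy \<rho>_in \<ge> - ln (\<Sum>i<r. exp (- C i))"
    using mu by simp
  have eq1: "(\<Sum>i<r. p i * exp (- (C i + ln (p i)))) = (\<Sum>i<r. exp (- C i))"
    using part1 by (intro sum.cong) auto
  show ?thesis using eq1 ineq unfolding C_def by simp
qed

end
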